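(* There exist permutations $\pi$ (one on $n$ keys for infinitely many $n$) such that $\mathrm{LIB}(\pi)=\Theta(\lg\lg n\cdot \mathrm{IB}(\pi))$.
   Context: For a permutation $\pi$ of $n$ keys, let $P$ be a static balanced binary tree whose leaves are the keys of $\pi$ in the order of $\pi$. For each internal vertex $v$ of $P$, list the leaves below $v$ in sorted key order, labeling each L or R according to whether it lies in the left or right subtree of $v$. $\mathrm{IB}(v)$ is the number of switches between L and R, $\mathrm{IB}(\pi)=\sum_v \mathrm{IB}(v)$. With $S(v)$ the decomposition of the labeled sequence into the minimal number of runs of equal labels, $\mathrm{LIB}(v)=\sum_{r\in S(v)}\lg(|r|+1)$ and $\mathrm{LIB}(\pi)=\sum_v\mathrm{LIB}(v)$. *)

theory Defs
  imports Complex_Main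
begin

(* A permutation of n keys: a list containing each of 0,...,n-1 exactly once,
   read left to right as the leaf order of the static tree. *)
definition is_perm :: "nat \<Rightarrow> nat list \<Rightarrow> bool" where
  "is_perm n xs \<longleftrightarrow> distinct xs \<and> set xs = {0..<n}"

(* Labeled sequence at an internal vertex with left leaves ls and right leaves rs:
   leaves in sorted key order, True = L, False = R. *)
definition node_labels :: "nat list \<Rightarrow> nat list \<Rightarrow> bool list" where
  "node_labels ls rs = map (\<lambda>k. k \<in> set ls) (sort (ls @ rs))"

definition switches :: "bool list \<Rightarrow> nat" where
  "switches bs = card {i. Suc i < length bs \<and> bs ! i \<noteq> bs ! Suc i}"

function run_lengths :: "bool list \<Rightarrow> nat list" where
  "run_lengths [] = []"
| "run_lengths (x # xs) =
     Suc (length (takeWhile (\<lambda>y. y = x) xs)) # run_lengths (dropWhile (\<lambda>y. y = x) xs)"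
  by pat_completeness auto
termination
  by (relation "measure length") (auto simp: le_imp_less_Suc length_dropWhile_le)

definition lg :: "real \<Rightarrow> real" where
  "lg x = log 2 x"

definition LIB_node :: "bool list \<Rightarrow> real" where
  "LIB_node bs = (\<Sum>r\<leftarrow>run_lengths bs. lg (real r + 1))"

function IB_tree :: "nat list \<Rightarrow> nat" where
  "IB_tree xs = (if length xs \<le> 1 then 0 else
     (let m = length xs div 2; ls = take m xs; rs = drop m xs in
      switches (node_labels ls rs) + IB_tree ls + IB_tree rs))"
  by pat_completeness auto
termination
  by (relation "measure length") auto

function LIB_tree :: "nat list \<Rightarrow> real" where
  "LIB_tree xs = (if length xs \<le> 1 then 0 else
     (let m = length xs div 2; ls = take m xs; rs = drop m xs in
      LIB_node (node_labels ls rs) + LIB_tree ls + LIB_tree rs))"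
  by pat_completeness auto
termination
  by (relation "measure length") auto

definition IB :: "nat list \<Rightarrow> nat" where "IB \<pi> = IB_tree \<pi>"
definition LIB :: "nat list \<Rightarrow> real" where "LIB \<pi> = LIB_tree \<pi>"

end

theory Submission
  imports Defs
begin

declare IB_tree.simps[simp del] LIB_tree.simps[simp del]

lemma IB_split: "2 \<le> length xs \<Longrightarrow> IB_tree xs =
   switches (node_labels (take (length xs div 2) xs) (drop (length xs div 2) xs))
   + IB_tree (take (length xs div 2) xs) + IB_tree (drop (length xs div 2) xs)"
  by (subst IB_tree.simps) (simp add: Let_def)

lemma LIB_split: "2 \<le> length xs \<Longrightarrow> LIB_tree xs =
   LIB_node (node_labels (take (length xs div 2) xs) (drop (length xs div 2) xs))
   + LIB_tree (take (length xs div 2) xs) + LIB_tree (drop (length xs div 2) xs)"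
  by (subst LIB_tree.simps) (simp add: Let_def)

lemma IB_small: "length xs \<le> 1 \<Longrightarrow> IB_tree xs = 0"
  by (subst IB_tree.simps) simp
lemma LIB_small: "length xs \<le> 1 \<Longrightarrow> LIB_tree xs = 0"
  by (subst LIB_tree.simps) simp

lemma insort_map_mono:
  fixes g :: "nat \<Rightarrow> nat"
  assumes "strict_mono g" shows "insort (g x) (map g xs) = map g (insort x xs)"
  by (induction xs) (auto simp: strict_mono_less_eq[OF assms])

lemma sort_map_mono:
  fixes g :: "nat \<Rightarrow> nat"
  assumes "strict_mono g" shows "sort (map g xs) = map g (sort xs)"
  by (induction xs) (auto simp: insort_map_mono[OF assms])

lemma node_labels_map:
  fixes g :: "nat \<Rightarrow> nat"
  assumes "strict_mono g" shows "node_labels (map g ls) (map g rs) = node_labels ls rs"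
proof -
  have inj: "inj g" using assms strict_mono_imp_inj_on by blast
  show ?thesis unfolding node_labels_def
    by (simp add: map_append[symmetric] sort_map_mono[OF assms] del: map_append)
       (simp add: inj_image_mem_iff[OF inj])
qed

lemma IB_map:
  fixes g :: "nat \<Rightarrow> nat"
  assumes "strict_mono g" shows "IB_tree (map g xs) = IB_tree xs"
proof (induction xs rule: IB_tree.induct)
  case (1 xs)
  show ?case
  proof (cases "length xs \<le> 1")
    case True then show ?thesis by (simp add: IB_small)
  next
    case False
    let ?m = "length xs div 2"
    have "IB_tree (map g xs) = switches (node_labels (map g (take ?m xs)) (map g (drop ?m xs))) + IB_tree (map g (take ?m xs)) + IB_tree (map g (drop ?m xs))"
      using IB_split[of "map g xs"] False by (simp add: take_map drop_map)
    also have "... = IB_tree xs" using 1 False by (simp add: node_labels_map[OF assms] IB_split[of xs])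
    finally show ?thesis .
  qed
qed

lemma LIB_map:
  fixes g :: "nat \<Rightarrow> nat"
  assumes "strict_mono g" shows "LIB_tree (map g xs) = LIB_tree xs"
proof (induction xs rule: LIB_tree.induct)
  case (1 xs)
  show ?case
  proof (cases "length xs \<le> 1")
    case True then show ?thesis by (simp add: LIB_small)
  next
    case False
    let ?m = "length xs div 2"
    have "LIB_tree (map g xs) = LIB_node (node_labels (map g (take ?m xs)) (map g (drop ?m xs))) + LIB_tree (map g (take ?m xs)) + LIB_tree (map g (drop ?m xs))"
      using LIB_split[of "map g xs"] False by (simp add: take_map drop_map)
    also have "... = LIB_tree xs" using 1 False by (simp add: node_labels_map[OF assms] LIB_split[of xs])
    finally show ?thesis .
  qed
qed

lemma switches_Nil: "switches [] = 0" by (simp add: switches_def)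
lemma switches_single: "switches [x] = 0" by (simp add: switches_def)

lemma switches_Cons2: "switches (x # y # xs) = (if x \<noteq> y then 1 else 0) + switches (y # xs)"
proof -
  let ?A = "{i. Suc i < length (y # xs) \<and> (y # xs) ! i \<noteq> (y # xs) ! Suc i}"
  have eq: "{i. Suc i < length (x # y # xs) \<and> (x # y # xs) ! i \<noteq> (x # y # xs) ! Suc i}
     = (if x \<noteq> y then {0} else {}) \<union> Suc ` ?A"
    apply (rule set_eqI)
    subgoal for i by (cases i) auto
    done
  have fin: "finite ?A" by (rule finite_subset[of _ "{..<length (y#xs)}"]) auto
  have "card (Suc ` ?A) = card ?A" by (simp add: card_image)
  moreover have "0 \<notin> Suc ` ?A" by auto
  ultimately show ?thesis unfolding switches_def eq using fin by auto
qed

lemma switches_Cons: "switches (x # xs) = (if xs = [] then 0 else (if x \<noteq> hd xs then 1 else 0) + switches xs)"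
  by (cases xs) (auto simp: switches_single switches_Cons2)

lemma switches_rep: "switches (replicate (Suc k) x @ rest) = switches (x # rest)"
  by (induction k) (auto simp: switches_Cons)

fun blocks :: "nat \<Rightarrow> nat \<Rightarrow> bool \<Rightarrow> bool list" where
  "blocks B 0 x = []"
| "blocks B (Suc c) x = replicate B x @ blocks B c (\<not> x)"

lemma blocks_hd: "B > 0 \<Longrightarrow> c > 0 \<Longrightarrow> blocks B c x \<noteq> [] \<and> hd (blocks B c x) = x"
  by (cases c; cases B) auto

lemma switches_blocks: "B > 0 \<Longrightarrow> switches (blocks B c x) = c - 1"
proof (induction c arbitrary: x)
  case 0 then show ?case by (simp add: switches_Nil)
next
  case (Suc c)
  obtain k where B: "B = Suc k" using Suc.prems by (cases B) auto
  show ?case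
  proof (cases c)
    case 0 then show ?thesis using switches_rep[of k x "[]"] by (simp add: B switches_single)
  next
    case (Suc c')
    then have "blocks B c (\<not> x) \<noteq> [] \<and> hd (blocks B c (\<not> x)) = (\<not> x)" using blocks_hd Suc.prems by auto
    then have "switches (x # blocks B c (\<not> x)) = 1 + switches (blocks B c (\<not> x))"
      by (simp add: switches_Cons)
    have "switches (blocks B (Suc c) x) = switches (replicate (Suc k) x @ blocks B c (\<not> x))"
      by (simp only: B blocks.simps)
    also have "... = switches (x # blocks B c (\<not> x))" by (rule switches_rep)
    also have "... = 1 + (c - 1)" using \<open>switches (x # blocks B c (\<not> x)) = 1 + switches (blocks B c (\<not> x))\<close> Suc.IH[OF Suc.prems] by simp
    finally show ?thesis using Suc by simp
  qed
qed

lemma run_rep: "run_lengths (replicate B x @ rest) = B # run_lengths rest" if h: "B > 0" "rest = [] \<or> hd rest \<noteq> x"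
proof -
  obtain k where B: "B = Suc k" using h by (cases B) auto
  have "takeWhile (\<lambda>y. y = x) (replicate k x @ rest) = replicate k x @ takeWhile (\<lambda>y. y = x) rest"
    by (rule takeWhile_append2) auto
  moreover have "takeWhile (\<lambda>y. y = x) rest = []" using h(2) by (cases rest) auto
  moreover have "dropWhile (\<lambda>y. y = x) (replicate k x @ rest) = dropWhile (\<lambda>y. y = x) rest"
    by (rule dropWhile_append2) auto
  moreover have "dropWhile (\<lambda>y. y = x) rest = rest" using h(2) by (cases rest) auto
  ultimately show ?thesis by (simp add: B)
qed

lemma run_blocks: "B > 0 \<Longrightarrow> run_lengths (blocks B c x) = replicate c B"
proof (induction c arbitrary: x)
  case 0 then show ?case by simp
next
  case (Suc c)
  have "blocks B c (\<not> x) = [] \<or> hd (blocks B c (\<not> x)) \<noteq> x"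
    using blocks_hd[OF Suc.prems, of c "\<not> x"] by (cases c) auto
  then show ?case using Suc by (simp add: run_rep)
qed

lemma LIB_blocks: "B > 0 \<Longrightarrow> LIB_node (blocks B c x) = real c * lg (real B + 1)"
  by (simp add: LIB_node_def run_blocks sum_list_replicate)


lemma map_const_on: "(\<And>k. k \<in> set xs \<Longrightarrow> f k = c) \<Longrightarrow> map f xs = replicate (length xs) c"
  by (induction xs) auto

lemma labels_blocks: "B > 0 \<Longrightarrow> map (\<lambda>k. even (k div B)) [a*B..<(a+c)*B] = blocks B c (even a)"
proof (induction c arbitrary: a)
  case 0 then show ?case by simp
next
  case (Suc c)
  have split: "[a*B..<(a+Suc c)*B] = [a*B..<a*B+B] @ [(Suc a)*B..<(Suc a + c)*B]"
    using upt_add_eq_append[of "a*B" "a*B+B" "c*B"] by (simp add: algebra_simps)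
  have "map (\<lambda>k. even (k div B)) [a*B..<a*B+B] = replicate B (even a)"
  proof -
    have "\<And>k. k \<in> set [a*B..<a*B+B] \<Longrightarrow> k div B = a"
      by (auto intro!: div_nat_eqI simp: algebra_simps)
    then show ?thesis by (subst map_const_on[where c = "even a"]) auto
  qed
  moreover have "map (\<lambda>k. even (k div B)) [(Suc a)*B..<(Suc a + c)*B] = blocks B c (even (Suc a))"
    by (rule Suc.IH[OF Suc.prems])
  ultimately show ?case unfolding split map_append by simp
qed

lemma id_labels: "h > 0 \<Longrightarrow> node_labels [a..<a+h] [a+h..<a+h+h] = blocks h 2 True"
proof -
  assume h: "h > 0"
  have s: "sort ([a..<a+h] @ [a+h..<a+h+h]) = [a..<a+h] @ [a+h..<a+h+h]"
    by (rule sorted_sort_id) (simp add: upt_add_eq_append[symmetric])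
  have 1: "map (\<lambda>k. k \<in> set [a..<a+h]) [a..<a+h] = replicate h True"
    by (subst map_const_on[where c = True]) auto
  have 2: "map (\<lambda>k. k \<in> set [a..<a+h]) [a+h..<a+h+h] = replicate h False"
    by (subst map_const_on[where c = False]) auto
  show ?thesis unfolding node_labels_def s using 1 2 by (simp add: numeral_2_eq_2)
qed

lemma id_IB: "IB_tree [a..<a+2^b] = 2^b - 1"
proof (induction b arbitrary: a)
  case 0 then show ?case by (simp add: IB_small)
next
  case (Suc b)
  have "IB_tree [a..<a+2^Suc b] = switches (node_labels [a..<a+2^b] [a+2^b..<a+2^b+2^b]) + IB_tree [a..<a+2^b] + IB_tree [a+2^b..<a+2^b+2^b]"
  proof -
    have "(1::nat) \<le> 2^b" by simp
    then have "2 \<le> length [a..<a+2^Suc b]" by simp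
    from IB_split[OF this] show ?thesis by (simp add: take_upt drop_upt mult_2 add.assoc)
  qed
  also have "... = 1 + (2^b - 1) + (2^b - 1)"
    using Suc.IH[of a] Suc.IH[of "a+2^b"] id_labels[of "2^b" a] switches_blocks[of "2^b" 2 True] by simp
  finally show ?case by simp
qed

fun Lid :: "nat \<Rightarrow> real" where
  "Lid 0 = 0"
| "Lid (Suc b) = 2 * lg (2^b + 1) + 2 * Lid b"

lemma id_LIB: "LIB_tree [a..<a+2^b] = Lid b"
proof (induction b arbitrary: a)
  case 0 then show ?case by (simp add: LIB_small)
next
  case (Suc b)
  have "LIB_tree [a..<a+2^Suc b] = LIB_node (node_labels [a..<a+2^b] [a+2^b..<a+2^b+2^b]) + LIB_tree [a..<a+2^b] + LIB_tree [a+2^b..<a+2^b+2^b]"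
  proof -
    have "(1::nat) \<le> 2^b" by simp
    then have "2 \<le> length [a..<a+2^Suc b]" by simp
    from LIB_split[OF this] show ?thesis by (simp add: take_upt drop_upt mult_2 add.assoc)
  qed
  also have "... = Lid (Suc b)"
    using Suc.IH[of a] Suc.IH[of "a+2^b"] id_labels[of "2^b" a] LIB_blocks[of "2^b" 2 True] by simp
  finally show ?case .
qed

lemma Lid_bounds: "0 \<le> Lid b \<and> Lid b \<le> 4 * 2^b - 2 * (real b + 2)"
proof (induction b)
  case 0 then show ?case by simp
next
  case (Suc b)
  have "lg (2^b + 1) \<le> real b + 1"
  proof -
    have "(2::real)^b + 1 \<le> 2 powr (real b + 1)"
      by (simp add: powr_add powr_realpow)
    then have "log 2 (2^b + 1) \<le> log 2 (2 powr (real b + 1))"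
      by (subst log_le_cancel_iff) (auto simp: add_pos_pos)
    then show ?thesis by (simp add: lg_def)
  qed
  moreover have "0 \<le> lg (2^b + 1)" unfolding lg_def by (subst zero_le_log_cancel_iff) (auto simp: add_pos_pos)
  ultimately show ?case using Suc by simp
qed


definition g0 :: "nat \<Rightarrow> nat \<Rightarrow> nat" where "g0 B k = k + B * (k div B)"
definition g1 :: "nat \<Rightarrow> nat \<Rightarrow> nat" where "g1 B k = k + B * (k div B) + B"

lemma g0_mono: "strict_mono (g0 B)"
proof (rule strict_monoI)
  fix k k' :: nat assume "k < k'"
  then have "k div B \<le> k' div B" by (simp add: div_le_mono)
  then have "B * (k div B) \<le> B * (k' div B)" by simp
  then show "g0 B k < g0 B k'" using \<open>k < k'\<close> unfolding g0_def by linarith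
qed

lemma g1_mono: "strict_mono (g1 B)"
  using g0_mono[of B] unfolding strict_mono_def g0_def g1_def by auto

lemma g0_alt: "g0 B k = k mod B + B * (2 * (k div B))"
  using div_mult_mod_eq[of k B] unfolding g0_def by (simp add: algebra_simps)

lemma g1_alt: "g1 B k = k mod B + B * (2 * (k div B) + 1)"
  using div_mult_mod_eq[of k B] unfolding g1_def by (simp add: algebra_simps)


lemma g0_range: assumes "B > 0"
  shows "g0 B ` {0..<N*B} = {k. k < 2*N*B \<and> even (k div B)}"
proof (rule set_eqI, rule iffI)
  fix k assume "k \<in> g0 B ` {0..<N*B}"
  then obtain k' where k': "k' < N*B" "k = g0 B k'" by auto
  have d: "k div B = 2 * (k' div B)" using k'(2) assms by (simp add: g0_alt)
  have q: "k' div B < N" using k'(1) by (simp add: less_mult_imp_div_less)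
  have "k < B + B * (2 * (k' div B))" using k'(2) assms by (simp add: g0_alt)
  also have "... = B * (2 * (k' div B) + 1)" by (simp add: algebra_simps)
  also have "... \<le> B * (2 * N)" using q by (intro mult_le_mono2) simp
  finally show "k \<in> {k. k < 2*N*B \<and> even (k div B)}" using d by (simp add: algebra_simps)
next
  fix k assume "k \<in> {k. k < 2*N*B \<and> even (k div B)}"
  then have k: "k < 2*N*B" "even (k div B)" by auto
  define k' where "k' = k mod B + B * (k div B div 2)"
  have "k' div B = k div B div 2" unfolding k'_def using assms by simp
  moreover have "k' mod B = k mod B" unfolding k'_def using assms by simp
  ultimately have "g0 B k' = k mod B + B * (k div B)" using k(2) by (simp add: g0_alt)
  then have e: "g0 B k' = k" using div_mult_mod_eq[of k B] by (simp add: algebra_simps)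
  have "k div B < 2 * N" using k(1) by (simp add: less_mult_imp_div_less mult.assoc mult.commute)
  then have h: "k div B div 2 + 1 \<le> N" by linarith
  have "k' < B + B * (k div B div 2)" unfolding k'_def using assms by simp
  also have "... = B * (k div B div 2 + 1)" by simp
  also have "... \<le> B * N" using h by (intro mult_le_mono2)
  finally have "k' < N * B" by (simp add: mult.commute)
  then show "k \<in> g0 B ` {0..<N*B}" using e by force
qed

lemma g1_range: assumes "B > 0"
  shows "g1 B ` {0..<N*B} = {k. k < 2*N*B \<and> odd (k div B)}"
proof (rule set_eqI, rule iffI)
  fix k assume "k \<in> g1 B ` {0..<N*B}"
  then obtain k' where k': "k' < N*B" "k = g1 B k'" by auto
  define Q where "Q = 2 * (k' div B) + 1"
  have "k = k' mod B + B * Q" using k'(2) unfolding Q_def by (simp only: g1_alt)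
  then have "k div B = Q" using assms by simp
  then have d: "k div B = 2 * (k' div B) + 1" unfolding Q_def .
  have q: "k' div B < N" using k'(1) by (simp add: less_mult_imp_div_less)
  have "k < B + B * (2 * (k' div B) + 1)" using k'(2) assms by (simp add: g1_alt)
  also have "... = B * (2 * (k' div B) + 2)" by (simp add: algebra_simps)
  also have "... \<le> B * (2 * N)" using q by (intro mult_le_mono2) simp
  finally show "k \<in> {k. k < 2*N*B \<and> odd (k div B)}" using d by (simp add: algebra_simps)
next
  fix k assume "k \<in> {k. k < 2*N*B \<and> odd (k div B)}"
  then have k: "k < 2*N*B" "odd (k div B)" by auto
  define k' where "k' = k mod B + B * (k div B div 2)"
  have "k' div B = k div B div 2" unfolding k'_def using assms by simp
  moreover have "k' mod B = k mod B" unfolding k'_def using assms by simp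
  ultimately have "g1 B k' = k mod B + B * (2 * (k div B div 2) + 1)" by (simp add: g1_alt)
  also have "2 * (k div B div 2) + 1 = k div B" using odd_two_times_div_two_succ[OF k(2)] by simp
  finally have e: "g1 B k' = k" using div_mult_mod_eq[of k B] by (simp add: algebra_simps)
  have "k div B < 2 * N" using k(1) by (simp add: less_mult_imp_div_less mult.assoc mult.commute)
  then have h: "k div B div 2 + 1 \<le> N" by linarith
  have "k' < B + B * (k div B div 2)" unfolding k'_def using assms by simp
  also have "... = B * (k div B div 2 + 1)" by simp
  also have "... \<le> B * N" using h by (intro mult_le_mono2)
  finally have "k' < N * B" by (simp add: mult.commute)
  then show "k \<in> g1 B ` {0..<N*B}" using e by force
qed


fun P :: "nat \<Rightarrow> nat \<Rightarrow> nat list" where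
  "P B 0 = [0..<B]"
| "P B (Suc t) = map (g0 B) (P B t) @ map (g1 B) (P B t)"

lemma P_props: "B > 0 \<Longrightarrow> set (P B t) = {0..<2^t*B} \<and> distinct (P B t) \<and> length (P B t) = 2^t*B"
proof (induction t)
  case 0 then show ?case by simp
next
  case (Suc t)
  let ?N = "2^t :: nat"
  have s: "set (P B t) = {0..<?N*B}" and d: "distinct (P B t)" and l: "length (P B t) = ?N*B"
    using Suc by auto
  have "set (P B (Suc t)) = g0 B ` {0..<?N*B} \<union> g1 B ` {0..<?N*B}"
    by (simp only: P.simps set_append set_map s)
  also have "... = {k. k < 2*?N*B \<and> even (k div B)} \<union> {k. k < 2*?N*B \<and> odd (k div B)}"
    by (simp only: g0_range[OF Suc.prems] g1_range[OF Suc.prems])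
  also have "... = {0..<2^Suc t*B}" by auto
  finally have 1: "set (P B (Suc t)) = {0..<2^Suc t*B}" .
  have i0: "inj_on (g0 B) (set (P B t))" using g0_mono strict_mono_imp_inj_on inj_on_subset by blast
  have i1: "inj_on (g1 B) (set (P B t))" using g1_mono strict_mono_imp_inj_on inj_on_subset by blast
  have disj: "set (map (g0 B) (P B t)) \<inter> set (map (g1 B) (P B t)) = {}"
    using g0_range[OF Suc.prems, of ?N] g1_range[OF Suc.prems, of ?N] s by auto
  have 2: "distinct (P B (Suc t))" using d i0 i1 disj by (simp add: distinct_map)
  show ?case using 1 2 l by simp
qed

lemma P_root_labels: assumes "B > 0"
  shows "node_labels (map (g0 B) (P B t)) (map (g1 B) (P B t)) = blocks B (2^Suc t) True"
proof -
  let ?N = "2^t :: nat"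
  have props: "set (P B (Suc t)) = {0..<2^Suc t*B}" "distinct (P B (Suc t))"
    using P_props[OF assms, of "Suc t"] by blast+
  have "sort (map (g0 B) (P B t) @ map (g1 B) (P B t)) = sort (P B (Suc t))" by simp
  also have "... = sorted_list_of_set (set (P B (Suc t)))"
    using props(2) by (simp add: sorted_list_of_set_sort_remdups distinct_remdups_id del: P.simps)
  also have "... = [0..<2^Suc t*B]" using props(1) by (simp del: P.simps)
  finally have so: "sort (map (g0 B) (P B t) @ map (g1 B) (P B t)) = [0*B..<(0+2^Suc t)*B]" by simp
  have mem: "k \<in> set (map (g0 B) (P B t)) \<longleftrightarrow> even (k div B)" if "k \<in> set [0*B..<(0+2^Suc t)*B]" for k
  proof -
    have "set (map (g0 B) (P B t)) = {k. k < 2*?N*B \<and> even (k div B)}"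
      using g0_range[OF assms, of ?N] P_props[OF assms, of t] by simp
    then show ?thesis using that by auto
  qed
  have "node_labels (map (g0 B) (P B t)) (map (g1 B) (P B t)) = map (\<lambda>k. even (k div B)) [0*B..<(0+2^Suc t)*B]"
    unfolding node_labels_def so using mem by (intro map_cong) auto
  also have "... = blocks B (2^Suc t) True" using labels_blocks[OF assms, of 0 "2^Suc t"] by simp
  finally show ?thesis .
qed

lemma P_split: assumes "B > 0"
  shows "2 \<le> length (P B (Suc t))"
    "take (length (P B (Suc t)) div 2) (P B (Suc t)) = map (g0 B) (P B t)"
    "drop (length (P B (Suc t)) div 2) (P B (Suc t)) = map (g1 B) (P B t)"
proof -
  have l: "length (P B t) = 2^t*B" using P_props[OF assms] by auto
  have "1 \<le> 2^t*B" using assms by simp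
  then have "2 \<le> 2^t*B + 2^t*B" by linarith
  then show "2 \<le> length (P B (Suc t))" using l by simp
  have "length (P B (Suc t)) div 2 = length (map (g0 B) (P B t))" using l by simp
  then show "take (length (P B (Suc t)) div 2) (P B (Suc t)) = map (g0 B) (P B t)"
    "drop (length (P B (Suc t)) div 2) (P B (Suc t)) = map (g1 B) (P B t)"
    by simp_all
qed

lemma IB_P_Suc: assumes "B > 0"
  shows "IB_tree (P B (Suc t)) = (2^Suc t - 1) + 2 * IB_tree (P B t)"
  using IB_split[OF P_split(1)[OF assms, of t]] P_split(2,3)[OF assms, of t]
    P_root_labels[OF assms, of t] switches_blocks[OF assms]
    IB_map[OF g0_mono] IB_map[OF g1_mono] by simp

lemma LIB_P_Suc: assumes "B > 0"
  shows "LIB_tree (P B (Suc t)) = 2^Suc t * lg (real B + 1) + 2 * LIB_tree (P B t)"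
  using LIB_split[OF P_split(1)[OF assms, of t]] P_split(2,3)[OF assms, of t]
    P_root_labels[OF assms, of t] LIB_blocks[OF assms]
    LIB_map[OF g0_mono] LIB_map[OF g1_mono] by simp

lemma pos2b: "(0::nat) < 2^b" by simp

lemma IB_P: "int (IB_tree (P (2^b) t)) = 2^t * (2^b + int t - 2) + 1"
proof (induction t)
  case 0
  have "IB_tree (P (2^b) 0) = 2^b - 1" using id_IB[of 0 b] by simp
  moreover have "(1::nat) \<le> 2^b" by simp
  ultimately show ?case by (simp add: of_nat_diff)
next
  case (Suc t)
  have "(1::nat) \<le> 2^Suc t" by simp
  then have "IB_tree (P (2^b) (Suc t)) + 1 = 2^Suc t + 2 * IB_tree (P (2^b) t)"
    using IB_P_Suc[of "2^b" t, OF pos2b] by linarith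
  then have "int (IB_tree (P (2^b) (Suc t))) + 1 = 2^Suc t + 2 * int (IB_tree (P (2^b) t))"
    by (metis of_nat_1 of_nat_add of_nat_mult of_nat_numeral of_nat_power)
  then show ?case using Suc by (simp add: algebra_simps)
qed

lemma LIB_P: "LIB_tree (P (2^b) t) = 2^t * (Lid b + real t * lg (2^b + 1))"
proof (induction t)
  case 0
  then show ?case using id_LIB[of 0 b] by simp
next
  case (Suc t)
  then show ?case using LIB_P_Suc[of "2^b" t] by (simp add: algebra_simps)
qed


lemma lg_between: assumes "(2::real)^b \<le> y" "y \<le> 2^(b+1)"
  shows "real b \<le> lg y \<and> lg y \<le> real b + 1"
proof -
  have y: "0 < y" using assms(1) by (smt (verit) zero_less_power)
  have "log 2 ((2::real)^b) \<le> log 2 y" using assms(1) y by (subst log_le_cancel_iff) auto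
  moreover have "log 2 y \<le> log 2 ((2::real)^(b+1))" using assms(2) y by (subst log_le_cancel_iff) auto
  moreover have "log 2 ((2::real)^(b+1)) = real (b+1)" by (rule log_pow_cancel) auto
  moreover have "log 2 ((2::real)^b) = real b" by (rule log_pow_cancel) auto
  ultimately show ?thesis unfolding lg_def by simp
qed

lemma real_ineq:
  fixes b B X L l1 ll :: real
  assumes b: "1 \<le> b" and B: "2 \<le> B" and X: "1 \<le> X" and L: "0 \<le> L" "L \<le> 4 * B"
    and l1: "b \<le> l1" "l1 \<le> b + 1" and ll: "b \<le> ll" "ll \<le> b + 1"
  shows "1/8 * (ll * (X * (B + B - 2) + 1)) \<le> X * (L + B * l1) \<and>
         X * (L + B * l1) \<le> 6 * (ll * (X * (B + B - 2) + 1))"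
proof
  define I where "I = X * (B + B - 2) + 1"
  have I0: "0 \<le> I" unfolding I_def using X B by (simp add: add_nonneg_nonneg)
  have BX: "0 \<le> B * X" using B X by simp
  have I1: "I \<le> 2 * (B * X)" unfolding I_def using X by (simp add: algebra_simps)
  have p: "(B - 2) * (X - 1) \<ge> 0" using X B by (intro mult_nonneg_nonneg) auto
  have e1: "(B - 2) * (X - 1) = B*X - B - 2*X + 2" by (simp add: algebra_simps)
  have e2: "I = 2*B*X - 2*X + 1" unfolding I_def by (simp add: algebra_simps)
  have I2: "B * X \<le> I" using p e1 e2 B by linarith
  have "ll * I \<le> (b + 1) * (2 * (B * X))" using ll I1 I0 b by (intro mult_mono) auto
  moreover have "((b + 1) / 4) * (B * X) = 1/8 * ((b + 1) * (2 * (B * X)))" by simp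
  ultimately have "1/8 * (ll * I) \<le> ((b + 1) / 4) * (B * X)" by linarith
  also have "... \<le> b * (B * X)" using b BX by (intro mult_right_mono) auto
  also have "... \<le> l1 * (B * X)" using l1 BX by (intro mult_right_mono) auto
  also have "... \<le> X * (L + B * l1)" using L X by (simp add: algebra_simps)
  finally show "1/8 * (ll * (X * (B + B - 2) + 1)) \<le> X * (L + B * l1)" unfolding I_def .
  have "X * (L + B * l1) \<le> X * (4 * B + B * (b + 1))"
    using X L l1 B by (intro mult_left_mono add_mono) auto
  also have "... = (b + 5) * (B * X)" by (simp add: algebra_simps)
  also have "... \<le> (6 * b) * (B * X)" using b BX by (intro mult_right_mono) auto
  also have "... \<le> (6 * ll) * (B * X)" using ll BX by (intro mult_right_mono) auto
  also have "... \<le> (6 * ll) * I" using I2 ll b by (intro mult_left_mono) auto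
  finally show "X * (L + B * l1) \<le> 6 * (ll * (X * (B + B - 2) + 1))" unfolding I_def by simp
qed


definition fS :: "nat \<Rightarrow> nat" where "fS b = 2^(2^b) * 2^b"

lemma fS_mono: "strict_mono fS"
unfolding strict_mono_Suc_iff
proof
  fix b
  have "fS (Suc b) = fS b * (2^(2^b) * 2)" unfolding fS_def by (simp add: power_add mult_2 algebra_simps)
  moreover have "0 < fS b" unfolding fS_def by simp
  moreover have "1 < (2::nat)^(2^b) * 2"
  proof -
    have "(1::nat) \<le> 2^(2^b)" by simp
    then show ?thesis by linarith
  qed
  ultimately show "fS b < fS (Suc b)" by simp
qed

lemma main_bounds:
  assumes b: "1 \<le> b"
  defines "n \<equiv> fS b" and "B \<equiv> (2::nat)^b"
  shows "is_perm n (P B B) \<and>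
     1/8 * (lg (lg (real n)) * real (IB (P B B))) \<le> LIB (P B B) \<and>
     LIB (P B B) \<le> 6 * (lg (lg (real n)) * real (IB (P B B)))"
proof -
  have Bpos: "B > 0" unfolding B_def by simp
  have nB: "n = 2^B * B" unfolding n_def fS_def B_def by simp
  have perm: "is_perm n (P B B)" using P_props[OF Bpos, of B] unfolding is_perm_def nB by simp
  have IBe: "real (IB (P B B)) = 2^B * (real B + real B - 2) + 1"
  proof -
    have "int (IB_tree (P B B)) = 2^B * (int B + int B - 2) + 1" using IB_P[of b B] unfolding B_def by simp
    then have "real_of_int (int (IB_tree (P B B))) = real_of_int (2^B * (int B + int B - 2) + 1)" by simp
    then show ?thesis unfolding IB_def by simp
  qed
  have LIBe: "LIB (P B B) = 2^B * (Lid b + real B * lg (real B + 1))"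
    using LIB_P[of b B] unfolding LIB_def B_def by simp
  have rn: "real n = 2^(B + b)" unfolding nB B_def by (simp add: power_add)
  have lgn: "lg (real n) = real B + real b" unfolding rn lg_def by simp
  have Bb: "(2::real)^b = real B" unfolding B_def by simp
  have bB: "real b \<le> real B" unfolding B_def by simp
  have ll: "real b \<le> lg (lg (real n)) \<and> lg (lg (real n)) \<le> real b + 1"
    unfolding lgn by (rule lg_between) (use Bb bB in auto)
  have l1: "real b \<le> lg (real B + 1) \<and> lg (real B + 1) \<le> real b + 1"
  proof (rule lg_between)
    show "2 ^ b \<le> real B + 1" using Bb by linarith
    have "(1::nat) \<le> B" using Bpos by simp
    then have "(1::real) \<le> real B" by simp
    moreover have "(2::real)^(b+1) = 2 * 2^b" by simp
    ultimately show "real B + 1 \<le> 2 ^ (b + 1)" using Bb by linarith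
  qed
  have B2: "2 \<le> real B"
  proof -
    have "(2::nat)^1 \<le> 2^b" using b by (intro power_increasing) auto
    then have "real 2 \<le> real B" unfolding B_def by (simp only: of_nat_le_iff power_one_right)
    then show ?thesis by simp
  qed
  have X: "1 \<le> (2::real)^B" by simp
  have L: "0 \<le> Lid b" "Lid b \<le> 4 * real B" using Lid_bounds[of b] Bb by auto
  have "1/8 * (lg (lg (real n)) * (2^B * (real B + real B - 2) + 1)) \<le> 2^B * (Lid b + real B * lg (real B + 1)) \<and>
     2^B * (Lid b + real B * lg (real B + 1)) \<le> 6 * (lg (lg (real n)) * (2^B * (real B + real B - 2) + 1))"
    using b ll l1 by (intro real_ineq[of "real b" "real B" "2^B" "Lid b" "lg (real B + 1)" "lg (lg (real n))", OF _ B2 X L]) auto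
  then show ?thesis using perm IBe LIBe by simp
qed

theorem lemma3:
  shows "\<exists>(S :: nat set) (\<pi> :: nat \<Rightarrow> nat list).
           infinite S \<and> (\<forall>n\<in>S. is_perm n (\<pi> n)) \<and>
           (\<exists>c1 c2 :: real. \<exists>n0 :: nat. c1 > 0 \<and> c2 > 0 \<and>
              (\<forall>n\<in>S. n \<ge> n0 \<longrightarrow>
                 c1 * (lg (lg (real n)) * real (IB (\<pi> n))) \<le> LIB (\<pi> n) \<and>
                 LIB (\<pi> n) \<le> c2 * (lg (lg (real n)) * real (IB (\<pi> n)))))"
proof -
  define S where "S = fS ` {1..}"
  define bo where "bo n = (SOME b. 1 \<le> b \<and> fS b = n)" for n
  define \<pi> where "\<pi> n = P (2^bo n) (2^bo n)" for n
  have inj: "inj fS" using fS_mono strict_mono_imp_inj_on by blast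
  have inf: "infinite S" unfolding S_def
    using finite_imageD[OF _ inj_on_subset[OF inj]] infinite_Ici[of "1::nat"] by blast
  have key: "is_perm n (\<pi> n) \<and>
     1/8 * (lg (lg (real n)) * real (IB (\<pi> n))) \<le> LIB (\<pi> n) \<and>
     LIB (\<pi> n) \<le> 6 * (lg (lg (real n)) * real (IB (\<pi> n)))" if "n \<in> S" for n
  proof -
    obtain b where b: "1 \<le> b" "n = fS b" using \<open>n \<in> S\<close> unfolding S_def by auto
    have "1 \<le> bo n \<and> fS (bo n) = n" unfolding bo_def by (rule someI[of _ b]) (use b in auto)
    then have "bo n = b" using b inj by (auto dest: injD)
    then show ?thesis using main_bounds[OF b(1)] b(2) unfolding \<pi>_def by simp
  qed
  show ?thesis
    by (rule exI[of _ S], rule exI[of _ \<pi>]) (use inf key in \<open>intro conjI exI[of _ "1/8"] exI[of _ 6] exI[of _ 0]\<close>, auto)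
qed

end
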